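(* Let $n\geq 5$ be an odd integer and let $J_n$ be the flower snark. Then $\beta_\ell(J_n)=4n$ for every integer $\ell\geq 4$, and $\beta_\ell^s(J_n)=4n$ for every integer $\ell\geq 3$.
   Context: Flower snark $J_n$ ($n\geq 5$ odd): take $n$ disjoint stars $K_{1,3}$, the $i$th with vertices $T_i=\{a_i,b_i,c_i,d_i\}$, centre $b_i$ and leaves $a_i,c_i,d_i$; add the cycle $a_1a_2\cdots a_na_1$ and the cycle $c_1c_2\cdots c_nd_1d_2\cdots d_nc_1$. It has $4n$ vertices. $d$ is the shortest-path distance, $d(s,X)=\min_{x\in X}d(s,x)$ for nonempty $X$, $\mathcal{D}_S(X)=(d(s_1,X),\dots,d(s_k,X))$. $S$ is an $\{\ell\}$-resolving set if $\mathcal{D}_S(X)\neq\mathcal{D}_S(Y)$ for all distinct nonempty vertex sets $X,Y$ with $|X|,|Y|\leq\ell$; $S$ is an $\ell$-solid-resolving set if $\mathcal{D}_S(X)\neq\mathcal{D}_S(Y)$ for all distinct nonempty vertex sets $X,Y$ with $|X|\leq\ell$ ($Y$ arbitrary). $\beta_\ell$, $\beta_\ell^s$ denote the minimum sizes of such sets. *)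

theory Defs
  imports Main
begin

text \<open>Flower snark J_n. Vertices are pairs (t, i) with i < n (0-based index) and
 t = 0,1,2,3 standing for a_i, b_i, c_i, d_i respectively.\<close>

definition fs_vertices :: "nat \<Rightarrow> (nat \<times> nat) set" where
  "fs_vertices n = {0..<4} \<times> {0..<n}"

definition fs_edges0 :: "nat \<Rightarrow> ((nat \<times> nat) \<times> (nat \<times> nat)) set" where
  "fs_edges0 n =
     {((1,i),(0,i)) | i. i < n} \<union> {((1,i),(2,i)) | i. i < n} \<union> {((1,i),(3,i)) | i. i < n}
   \<union> {((0,i),(0,(i+1) mod n)) | i. i < n}
   \<union> {((2,i),(2,i+1)) | i. i + 1 < n} \<union> {((2,n-1),(3,0))}
   \<union> {((3,i),(3,i+1)) | i. i + 1 < n} \<union> {((3,n-1),(2,0))}"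

definition fs_adj :: "nat \<Rightarrow> ((nat \<times> nat) \<times> (nat \<times> nat)) set" where
  "fs_adj n = fs_edges0 n \<union> (fs_edges0 n)\<inverse>"

definition fs_dist :: "nat \<Rightarrow> nat \<times> nat \<Rightarrow> nat \<times> nat \<Rightarrow> nat" where
  "fs_dist n u v = (LEAST k. (u, v) \<in> fs_adj n ^^ k)"

definition fs_setdist :: "nat \<Rightarrow> nat \<times> nat \<Rightarrow> (nat \<times> nat) set \<Rightarrow> nat" where
  "fs_setdist n s X = Min ((\<lambda>x. fs_dist n s x) ` X)"

definition same_rep :: "nat \<Rightarrow> (nat \<times> nat) set \<Rightarrow> (nat \<times> nat) set \<Rightarrow> (nat \<times> nat) set \<Rightarrow> bool" where
  "same_rep n S X Y = (\<forall>s\<in>S. fs_setdist n s X = fs_setdist n s Y)"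

definition l_resolving :: "nat \<Rightarrow> nat \<Rightarrow> (nat \<times> nat) set \<Rightarrow> bool" where
  "l_resolving n l S = (S \<subseteq> fs_vertices n \<and>
     (\<forall>X Y. X \<subseteq> fs_vertices n \<and> Y \<subseteq> fs_vertices n \<and> X \<noteq> {} \<and> Y \<noteq> {}
        \<and> card X \<le> l \<and> card Y \<le> l \<and> X \<noteq> Y \<longrightarrow> \<not> same_rep n S X Y))"

definition l_solid_resolving :: "nat \<Rightarrow> nat \<Rightarrow> (nat \<times> nat) set \<Rightarrow> bool" where
  "l_solid_resolving n l S = (S \<subseteq> fs_vertices n \<and>
     (\<forall>X Y. X \<subseteq> fs_vertices n \<and> Y \<subseteq> fs_vertices n \<and> X \<noteq> {} \<and> Y \<noteq> {}
        \<and> card X \<le> l \<and> X \<noteq> Y \<longrightarrow> \<not> same_rep n S X Y))"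

definition beta_l :: "nat \<Rightarrow> nat \<Rightarrow> nat" where
  "beta_l n l = (LEAST k. \<exists>S. l_resolving n l S \<and> card S = k)"

definition beta_s :: "nat \<Rightarrow> nat \<Rightarrow> nat" where
  "beta_s n l = (LEAST k. \<exists>S. l_solid_resolving n l S \<and> card S = k)"

end

theory Submission imports Defs begin

definition nbl :: "nat \<Rightarrow> nat \<times> nat \<Rightarrow> (nat \<times> nat) list" where
  "nbl n v = (case v of (t,i) \<Rightarrow>
     if t = 0 then [(1,i), (0,(i+1) mod n), (0,(i+n-1) mod n)]
     else if t = 1 then [(0,i),(2,i),(3,i)]
     else if t = 2 then [(1,i), if i+1<n then (2,i+1) else (3,0), if i=0 then (3,n-1) else (2,i-1)]
     else [(1,i), if i+1<n then (3,i+1) else (2,0), if i=0 then (2,n-1) else (3,i-1)])"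

definition nb :: "nat \<Rightarrow> nat \<times> nat \<Rightarrow> (nat \<times> nat) set" where
  "nb n v = set (nbl n v)"

lemma nbl_len: "length (nbl n v) = 3"
  by (auto simp: nbl_def split: prod.splits)

lemma mod_pred: "(j::nat) < n \<Longrightarrow> 2 \<le> n \<Longrightarrow> (Suc j mod n + n - Suc 0) mod n = j"
proof (cases "Suc j < n")
  case True
  assume "j < n" "2 \<le> n"
  then have "Suc j mod n + n - Suc 0 = j + n" using True by simp
  then show ?thesis using \<open>j<n\<close> by simp
next
  case False
  assume "j < n" "2 \<le> n"
  then have "Suc j = n" using False by simp
  then show ?thesis by simp
qed

lemma nbL:
  assumes "i < n" "2 \<le> n"
  shows "(1,i) \<in> nb n (0,i)" "(0,i) \<in> nb n (1,i)"
    "(1,i) \<in> nb n (2,i)" "(2,i) \<in> nb n (1,i)"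
    "(1,i) \<in> nb n (3,i)" "(3,i) \<in> nb n (1,i)"
    "(0,i) \<in> nb n (0,(i+1) mod n)" "(0,(i+1) mod n) \<in> nb n (0,i)"
  using assms by (simp_all add: nb_def nbl_def mod_pred)

lemma nbL2:
  assumes "i + 1 < n"
  shows "(2,i) \<in> nb n (2,i+1)" "(2,i+1) \<in> nb n (2,i)"
    "(3,i) \<in> nb n (3,i+1)" "(3,i+1) \<in> nb n (3,i)"
  using assms by (simp_all add: nb_def nbl_def)

lemma nbL3:
  assumes "2 \<le> n"
  shows "(2,n-1) \<in> nb n (3,0)" "(3,0) \<in> nb n (2,n-1)"
    "(3,n-1) \<in> nb n (2,0)" "(2,0) \<in> nb n (3,n-1)"
  using assms by (simp_all add: nb_def nbl_def)

lemma adj_nb: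
  assumes "(w,v) \<in> fs_adj n" "n \<ge> 2"
  shows "w \<in> nb n v"
proof -
  have "(w,v) \<in> fs_edges0 n \<or> (v,w) \<in> fs_edges0 n" using assms(1) by (auto simp: fs_adj_def)
  then show ?thesis
  proof
    assume "(w,v) \<in> fs_edges0 n"
    then show ?thesis unfolding fs_edges0_def using assms(2) by (elim UnE; clarsimp simp: nbL[simplified] nbL2[simplified] nbL3[simplified])
  next
    assume "(v,w) \<in> fs_edges0 n"
    then show ?thesis unfolding fs_edges0_def using assms(2) by (elim UnE; clarsimp simp: nbL[simplified] nbL2[simplified] nbL3[simplified])
  qed
qed

lemma card3: "card {a,b,c::'a} \<le> 3"
  using card_length[of "[a,b,c]"] by simp

lemma nb_props:
  assumes "v \<in> fs_vertices n" "n \<ge> 2"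
  shows "nb n v \<subseteq> fs_vertices n" "v \<notin> nb n v" "finite (nb n v)" "card (nb n v) \<le> 3" "nb n v \<noteq> {}"
proof -
  obtain t i where v: "v = (t,i)" "t < 4" "i < n" using assms by (auto simp: fs_vertices_def)
  show "nb n v \<subseteq> fs_vertices n" using v assms by (auto simp: nb_def nbl_def fs_vertices_def)
  show "v \<notin> nb n v" using v assms by (auto simp: nb_def nbl_def mod_if split: if_splits)
  show "finite (nb n v)" unfolding nb_def by simp
  show "card (nb n v) \<le> 3" unfolding nb_def using card_length[of "nbl n v"] nbl_len[of n v] by simp
  show "nb n v \<noteq> {}" unfolding nb_def using nbl_len[of n v] by auto
qed

lemma e1: "i < n \<Longrightarrow> ((1,i),(0,i)) \<in> fs_adj n"
  unfolding fs_adj_def fs_edges0_def by simp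
lemma e2: "i < n \<Longrightarrow> ((1,i),(2,i)) \<in> fs_adj n"
  unfolding fs_adj_def fs_edges0_def by simp
lemma e3: "i < n \<Longrightarrow> ((1,i),(3,i)) \<in> fs_adj n"
  unfolding fs_adj_def fs_edges0_def by simp
lemma e4: "i < n \<Longrightarrow> ((0,i),(0,(i+1) mod n)) \<in> fs_adj n"
  unfolding fs_adj_def fs_edges0_def by simp

lemma adj_sym: "(u,v) \<in> fs_adj n \<Longrightarrow> (v,u) \<in> fs_adj n"
  by (auto simp: fs_adj_def)

lemma conn0: "i < n \<Longrightarrow> ((0,i),(0,0)) \<in> (fs_adj n)\<^sup>*"
proof (induction i)
  case 0 then show ?case by simp
next
  case (Suc i)
  have "((0,i),(0,Suc i)) \<in> fs_adj n" using Suc.prems e4[of i n] by simp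
  then have "((0,Suc i),(0,i)) \<in> fs_adj n" by (rule adj_sym)
  then show ?case using Suc by (meson Suc_lessD converse_rtrancl_into_rtrancl)
qed

lemma conn:
  assumes "v \<in> fs_vertices n"
  shows "(v,(0,0)) \<in> (fs_adj n)\<^sup>*"
proof -
  obtain t i where v: "v = (t,i)" "t < 4" "i < n" using assms by (auto simp: fs_vertices_def)
  have a: "((0,i),(0,0)) \<in> (fs_adj n)\<^sup>*" using conn0 v by simp
  have b: "((1,i),(0,0)) \<in> (fs_adj n)\<^sup>*"
  proof -
    have "((1,i),(0,i)) \<in> fs_adj n" using v(3) by (rule e1)
    then show ?thesis using a by (meson converse_rtrancl_into_rtrancl)
  qed
  have c: "((2,i),(0,0)) \<in> (fs_adj n)\<^sup>*"
  proof -
    have "((1,i),(2,i)) \<in> fs_adj n" using v(3) by (rule e2)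
    then show ?thesis using b adj_sym by (meson converse_rtrancl_into_rtrancl)
  qed
  have d: "((3,i),(0,0)) \<in> (fs_adj n)\<^sup>*"
  proof -
    have "((1,i),(3,i)) \<in> fs_adj n" using v(3) by (rule e3)
    then show ?thesis using b adj_sym by (meson converse_rtrancl_into_rtrancl)
  qed
  have "t = 0 \<or> t = 1 \<or> t = 2 \<or> t = 3" using v by auto
  then show ?thesis using a b c d v by auto
qed

lemma path_ex:
  assumes "u \<in> fs_vertices n" "v \<in> fs_vertices n"
  shows "\<exists>k. (u,v) \<in> fs_adj n ^^ k"
proof -
  have "((0,0),v) \<in> (fs_adj n)\<^sup>*"
  proof -
    have "(v,(0,0)) \<in> (fs_adj n)\<^sup>*" using conn assms by blast
    then have "((0,0),v) \<in> ((fs_adj n)\<inverse>)\<^sup>*" by (simp add: rtrancl_converse)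
    moreover have "(fs_adj n)\<inverse> = fs_adj n" by (auto simp: fs_adj_def)
    ultimately show ?thesis by simp
  qed
  then have "(u,v) \<in> (fs_adj n)\<^sup>*" using conn[OF assms(1)] by (meson rtrancl_trans)
  then show ?thesis by (simp add: rtrancl_power)
qed

lemma dist_self: "fs_dist n u u = 0"
  unfolding fs_dist_def by (rule Least_eq_0) simp

lemma dist_path:
  assumes "u \<in> fs_vertices n" "v \<in> fs_vertices n"
  shows "(u,v) \<in> fs_adj n ^^ fs_dist n u v"
  unfolding fs_dist_def using path_ex[OF assms] by (rule LeastI_ex)

lemma dist_pos:
  assumes "u \<in> fs_vertices n" "v \<in> fs_vertices n" "u \<noteq> v"
  shows "fs_dist n u v > 0"
  using dist_path[OF assms(1,2)] assms(3) by (cases "fs_dist n u v") auto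

lemma dist_le: "(u,v) \<in> fs_adj n ^^ k \<Longrightarrow> fs_dist n u v \<le> k"
  unfolding fs_dist_def by (rule Least_le)

lemma finV: "finite (fs_vertices n)" by (simp add: fs_vertices_def)
lemma cardV: "card (fs_vertices n) = 4 * n" by (simp add: fs_vertices_def card_cartesian_product)

lemma setdist_mem0: "finite X \<Longrightarrow> x \<in> X \<Longrightarrow> fs_setdist n x X = 0"
  unfolding fs_setdist_def using dist_self[of n x]
  by (metis (no_types, lifting) Min_le finite_imageI image_eqI le_zero_eq)

lemma setdist0_mem:
  assumes "X \<subseteq> fs_vertices n" "x \<in> fs_vertices n" "X \<noteq> {}" "fs_setdist n x X = 0"
  shows "x \<in> X"
proof -
  have fX: "finite X" using assms(1) finV finite_subset by blast
  have "Min ((\<lambda>y. fs_dist n x y) ` X) \<in> (\<lambda>y. fs_dist n x y) ` X"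
    using fX assms(3) by (intro Min_in) auto
  then obtain y where y: "y \<in> X" "fs_dist n x y = 0" using assms(4) unfolding fs_setdist_def by auto
  have "x = y"
  proof (rule ccontr)
    assume "x \<noteq> y"
    then have "fs_dist n x y > 0" using dist_pos assms y(1) by blast
    then show False using y by simp
  qed
  then show ?thesis using y by simp
qed

lemma full_res:
  assumes "X \<subseteq> fs_vertices n" "Y \<subseteq> fs_vertices n" "X \<noteq> {}" "Y \<noteq> {}"
    "same_rep n (fs_vertices n) X Y"
  shows "X = Y"
proof -
  have fX: "finite X" using assms(1) finV finite_subset by blast
  have fY: "finite Y" using assms(2) finV finite_subset by blast
  show ?thesis
  proof
    show "X \<subseteq> Y"
    proof
      fix x assume x: "x \<in> X"
      have "x \<in> fs_vertices n" using x assms(1) by blast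
      then have "fs_setdist n x Y = fs_setdist n x X" using assms(5) unfolding same_rep_def by auto
      then have "fs_setdist n x Y = 0" using setdist_mem0[where n=n, OF fX x] by simp
      then show "x \<in> Y" using setdist0_mem assms x by blast
    qed
  next
    show "Y \<subseteq> X"
    proof
      fix x assume x: "x \<in> Y"
      have "x \<in> fs_vertices n" using x assms(2) by blast
      then have "fs_setdist n x Y = fs_setdist n x X" using assms(5) unfolding same_rep_def by auto
      then have "fs_setdist n x X = 0" using setdist_mem0[where n=n, OF fY x] by simp
      then show "x \<in> X" using setdist0_mem assms x by blast
    qed
  qed
qed

lemma nb_same:
  assumes "v \<in> fs_vertices n" "n \<ge> 2" "S \<subseteq> fs_vertices n - {v}"
  shows "same_rep n S (nb n v) (insert v (nb n v))"
  unfolding same_rep_def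
proof
  fix s assume sS: "s \<in> S"
  have s: "s \<in> fs_vertices n" "s \<noteq> v" using sS assms(3) by auto
  have fN: "finite (nb n v)" "nb n v \<noteq> {}" using nb_props[OF assms(1,2)] by auto
  define k where "k = fs_dist n s v"
  have p: "(s,v) \<in> fs_adj n ^^ k" unfolding k_def using dist_path s assms(1) by blast
  have k0: "k > 0" unfolding k_def using dist_pos s assms(1) by blast
  then obtain m where m: "k = Suc m" using gr0_implies_Suc by blast
  then obtain w where w: "(s,w) \<in> fs_adj n ^^ m" "(w,v) \<in> fs_adj n" using p by auto
  have wN: "w \<in> nb n v" using adj_nb[OF w(2) assms(2)] .
  have "fs_dist n s w \<le> m" using dist_le[OF w(1)] .
  then have le: "Min ((\<lambda>x. fs_dist n s x) ` nb n v) \<le> fs_dist n s v"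
    using wN fN unfolding k_def[symmetric] m
    by (meson Min_le finite_imageI image_eqI le_SucI order_trans)
  have "fs_setdist n s (insert v (nb n v)) = min (fs_dist n s v) (Min ((\<lambda>x. fs_dist n s x) ` nb n v))"
    unfolding fs_setdist_def using fN by (simp add: Min_insert)
  also have "\<dots> = fs_setdist n s (nb n v)" using le unfolding fs_setdist_def by simp
  finally show "fs_setdist n s (nb n v) = fs_setdist n s (insert v (nb n v))" by simp
qed

lemma small_not_all:
  assumes "S \<subseteq> fs_vertices n" "card S < 4 * n"
  shows "\<exists>v \<in> fs_vertices n. S \<subseteq> fs_vertices n - {v}"
proof (rule ccontr)
  assume "\<not> ?thesis"
  then have "fs_vertices n \<subseteq> S" using assms(1) by blast
  then have "S = fs_vertices n" using assms(1) by blast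
  then show False using assms(2) cardV by simp
qed

lemma V_res: "l_resolving n l (fs_vertices n)" "l_solid_resolving n l (fs_vertices n)"
  unfolding l_resolving_def l_solid_resolving_def using full_res by blast+

lemma lower:
  assumes "n \<ge> 2" "S \<subseteq> fs_vertices n"
    "\<forall>X Y. X \<subseteq> fs_vertices n \<and> Y \<subseteq> fs_vertices n \<and> X \<noteq> {} \<and> Y \<noteq> {}
        \<and> card X \<le> 3 \<and> card Y \<le> 4 \<and> X \<noteq> Y \<longrightarrow> \<not> same_rep n S X Y"
  shows "4 * n \<le> card S"
proof (rule ccontr)
  assume "\<not> 4 * n \<le> card S"
  then obtain v where v: "v \<in> fs_vertices n" "S \<subseteq> fs_vertices n - {v}"
    using small_not_all assms(2) by (meson not_le)
  note P = nb_props[OF v(1) assms(1)]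
  have c4: "card (insert v (nb n v)) \<le> 4" using P card_insert_le_m1
    by (simp add: card_insert_if)
  have "X \<noteq> Y" if "X = nb n v" "Y = insert v (nb n v)" for X Y using P that by blast
  then show False using assms(3)[rule_format, of "nb n v" "insert v (nb n v)"] P c4 v nb_same[OF v(1) assms(1) v(2)]
    by blast
qed

lemma beta_facts:
  assumes "n \<ge> 2"
  shows "l \<ge> 4 \<Longrightarrow> beta_l n l = 4 * n" "l \<ge> 3 \<Longrightarrow> beta_s n l = 4 * n"
proof -
  assume l: "l \<ge> 4"
  show "beta_l n l = 4 * n" unfolding beta_l_def
  proof (rule Least_equality)
    show "\<exists>S. l_resolving n l S \<and> card S = 4 * n" using V_res(1) cardV by blast
  next
    fix k assume "\<exists>S. l_resolving n l S \<and> card S = k"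
    then obtain S where S: "l_resolving n l S" "card S = k" by blast
    have "4 * n \<le> card S"
      by (rule lower[OF assms]) (use S(1) l in \<open>auto simp: l_resolving_def\<close>)
    then show "4 * n \<le> k" using S by simp
  qed
next
  assume l: "l \<ge> 3"
  show "beta_s n l = 4 * n" unfolding beta_s_def
  proof (rule Least_equality)
    show "\<exists>S. l_solid_resolving n l S \<and> card S = 4 * n" using V_res(2) cardV by blast
  next
    fix k assume "\<exists>S. l_solid_resolving n l S \<and> card S = k"
    then obtain S where S: "l_solid_resolving n l S" "card S = k" by blast
    have "4 * n \<le> card S"
      by (rule lower[OF assms]) (use S(1) l in \<open>auto simp: l_solid_resolving_def\<close>)
    then show "4 * n \<le> k" using S by simp
  qed
qed

theorem mainTheorem14:
  fixes n :: nat
  assumes "n \<ge> 5" and "odd n"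
  shows "(\<forall>l::nat. l \<ge> 4 \<longrightarrow> beta_l n l = 4 * n)
       \<and> (\<forall>l::nat. l \<ge> 3 \<longrightarrow> beta_s n l = 4 * n)"
  using beta_facts[of n] assms(1) by auto

end
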